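(* Let $\gamma>0$, $\mu\ge0$, and $$q_\mu(r,t)=\int_0^\infty p(r,s)\,p_\mu(s,t)\,ds,\qquad p(r,s)=\frac{2r^{\gamma-1}e^{-r^2/(2s)}}{(2s)^{\gamma/2}\Gamma(\gamma/2)},\quad p_\mu(s,t)=\frac{t\,e^{-(t-\mu s)^2/(2s)}}{\sqrt{2\pi s^3}},$$ which is the density of $R^\gamma(T^\mu_t)$ ($R^\gamma$ a $\gamma$-dimensional Bessel process from $0$, $T^\mu_t$ the first passage time to level $t$ of an independent Brownian motion with drift $\mu$). Then $$\left(2\mu\frac{\partial}{\partial t}-\frac{\partial^2}{\partial t^2}\right)q_\mu=\left(\frac{\partial^2}{\partial r^2}-(\gamma-1)\frac{\partial}{\partial r}\frac1r\right)q_\mu,\qquad r,t>0.$$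
   Context: The operator $\frac{\partial}{\partial r}\frac1r$ means $f\mapsto\frac{\partial}{\partial r}\left(\frac fr\right)$. *)

theory Defs
  imports "HOL-Analysis.Analysis"
begin

text \<open>Density of a gamma-dimensional Bessel process started at 0, at time s, evaluated at r.\<close>
definition bessel_p :: "real \<Rightarrow> real \<Rightarrow> real \<Rightarrow> real" where
  "bessel_p \<gamma> r s = 2 * r powr (\<gamma> - 1) * exp (- (r\<^sup>2) / (2 * s))
      / ((2 * s) powr (\<gamma> / 2) * Gamma (\<gamma> / 2))"

text \<open>Density at s of the first passage time to level t of Brownian motion with drift mu.\<close>
definition passage_p :: "real \<Rightarrow> real \<Rightarrow> real \<Rightarrow> real" where
  "passage_p \<mu> s t = t * exp (- ((t - \<mu> * s)\<^sup>2) / (2 * s)) / sqrt (2 * pi * s ^ 3)"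

definition q_mu :: "real \<Rightarrow> real \<Rightarrow> real \<Rightarrow> real \<Rightarrow> real" where
  "q_mu \<gamma> \<mu> r t = (LBINT s:{0<..}. bessel_p \<gamma> r s * passage_p \<mu> s t)"

end

theory Submission
  imports Defs "HOL-Real_Asymp.Real_Asymp"
begin


lemma int_one_plus_powr:
  fixes k :: real assumes k: "k > 1"
  shows "set_integrable lborel {0<..} (\<lambda>s. (1 + s) powr (-k))"
proof -
  let ?F = "\<lambda>s::real. - ((1 + s) powr (1 - k) / (k - 1))"
  have "set_integrable lborel (einterval 0 \<infinity>) (\<lambda>s. (1 + s) powr (-k))"
  proof (rule interval_integral_FTC_nonneg(1)[where F = ?F and A = "-1/(k-1)" and B = 0])
    show "(?F has_real_derivative (1 + x) powr (-k)) (at x)" if "0 < ereal x" for x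
      using that k
      by (auto intro!: derivative_eq_intros) (simp add: field_simps powr_diff powr_minus)
    show "((?F \<circ> real_of_ereal) \<longlongrightarrow> -1/(k-1)) (at_right 0)"
      unfolding zero_ereal_def ereal_tendsto_simps using k
      by (auto intro!: tendsto_eq_intros)
    show "((?F \<circ> real_of_ereal) \<longlongrightarrow> 0) (at_left \<infinity>)"
      unfolding ereal_tendsto_simps using k by real_asymp
  qed (auto intro!: continuous_intros)
  then show ?thesis by (simp add: zero_ereal_def)
qed

lemma powr_exp_bound:
  fixes k c s :: real assumes k: "k > 0" and c: "c > 0" and s: "s > 0"
  shows "s powr (-k) * exp (-c/s) \<le> (max 1 (k/c)) powr k * (1 + s) powr (-k)"
proof -
  define M where "M = max 1 (k/c)"
  have M1: "M \<ge> 1" and M2: "M * (c/k) \<ge> 1" using k c by (auto simp: M_def field_simps max_def)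
  have "1 + (c/k)/s \<le> exp ((c/k)/s)" by (rule exp_ge_add_one_self_aux) (use k c s in auto)
  hence "M * (1 + (c/k)/s) \<le> M * exp ((c/k)/s)" using M1 by simp
  moreover have "1 + 1/s \<le> M * (1 + (c/k)/s)"
  proof -
    have "1/s \<le> M * (c/k) / s" using divide_right_mono[OF M2, of s] s by simp
    thus ?thesis using M1 by (simp add: algebra_simps)
  qed
  ultimately have le1: "1 + 1/s \<le> M * exp ((c/k)/s)" by linarith
  have "(1 + 1/s) powr k \<le> (M * exp ((c/k)/s)) powr k"
    using le1 s k by (intro powr_mono2) auto
  also have "\<dots> = M powr k * exp (c/s)"
    using M1 k by (simp add: powr_mult powr_def ln_mult field_simps exp_add)
  finally have A: "(1 + 1/s) powr k \<le> M powr k * exp (c/s)" .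
  have B: "s powr (-k) = (1 + 1/s) powr k * (1 + s) powr (-k)"
  proof -
    have "1 + 1/s = (1+s)/s" using s by (simp add: field_simps)
    thus ?thesis using s by (simp add: powr_divide powr_minus field_simps)
  qed
  have "s powr (-k) * exp (-c/s) = (1 + 1/s) powr k * exp (-c/s) * (1 + s) powr (-k)"
    using B by simp
  also have "\<dots> \<le> M powr k * exp (c/s) * exp (-c/s) * (1 + s) powr (-k)"
    using A by (intro mult_right_mono) auto
  also have "\<dots> = M powr k * (1 + s) powr (-k)" by (simp add: exp_minus field_simps)
  finally show ?thesis unfolding M_def .
qed

lemma L0:
  fixes k c :: real assumes k: "k > 1" and c: "c > 0"
  shows "set_integrable lborel {0<..} (\<lambda>s. s powr (-k) * exp (-c/s))"
proof (rule set_integrable_bound[OF set_integrable_mult_right[OF int_one_plus_powr[OF k], of "(max 1 (k/c)) powr k"]])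
  show "set_borel_measurable lborel {0<..} (\<lambda>s. s powr (-k) * exp (-c/s))"
    unfolding set_borel_measurable_def by measurable
  show "AE x in lborel. x \<in> {0<..} \<longrightarrow> norm (x powr - k * exp (- c / x)) \<le> norm (max 1 (k / c) powr k * (1 + x) powr - k)"
    using powr_exp_bound[of k c] k c by auto
qed

definition kern :: "real \<Rightarrow> real \<Rightarrow> real \<Rightarrow> real \<Rightarrow> real" where
  "kern m k b s = s powr (-k) * exp (- (b/(2* s)) - m^2* s/2)"

definition G :: "real \<Rightarrow> real \<Rightarrow> real \<Rightarrow> real" where
  "G m k b = (LBINT s:{0<..}. kern m k b s)"

lemma kern_bound:
  assumes "s > 0" "b' \<le> b"
  shows "\<bar>kern m k b s\<bar> \<le> s powr (-k) * exp (- (b'/2)/s)"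
proof -
  have "exp (- (b/(2* s)) - m^2* s/2) \<le> exp (- (b'/2)/s)"
  proof -
    have "b'/(2* s) \<le> b/(2* s)" using assms by (intro divide_right_mono) auto
    moreover have "m^2* s/2 \<ge> 0" using assms by simp
    moreover have "-(b'/2)/s = -(b'/(2* s))" by simp
    ultimately show ?thesis by simp
  qed
  thus ?thesis using assms unfolding kern_def by (simp add: abs_mult mult_left_mono)
qed

lemma kern_meas: "set_borel_measurable lborel {0<..} (kern m k b)"
  unfolding set_borel_measurable_def kern_def by measurable

lemma kern_int:
  assumes "k > 1" "b > 0"
  shows "set_integrable lborel {0<..} (kern m k b)"
proof (rule set_integrable_bound[OF L0[of k "b/2"] kern_meas])
  show "AE x in lborel. x \<in> {0<..} \<longrightarrow> norm (kern m k b x) \<le> norm (x powr - k * exp (- (b / 2) / x))"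
    using kern_bound[of _ b b m k] by auto
qed (use assms in auto)



lemma mvt_bound:
  fixes f f' :: "real \<Rightarrow> real" and B x0 d y :: real
  assumes der: "\<And>x. \<bar>x - x0\<bar> < d \<Longrightarrow> (f has_real_derivative f' x) (at x)"
    and bnd: "\<And>x. \<bar>x - x0\<bar> < d \<Longrightarrow> \<bar>f' x\<bar> \<le> B"
    and y: "\<bar>y - x0\<bar> < d"
  shows "\<bar>f y - f x0\<bar> \<le> B * \<bar>y - x0\<bar>"
proof (cases y x0 rule: linorder_cases)
  case less
  obtain z where z: "y < z" "z < x0" "f x0 - f y = (x0 - y) * f' z"
    using MVT2[OF less, of f f'] der y by force
  have "\<bar>z - x0\<bar> < d" using z y by auto
  hence "\<bar>f' z\<bar> \<le> B" by (rule bnd)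
  thus ?thesis using z less by (simp add: abs_mult abs_minus_commute mult.commute mult_right_mono)
next
  case greater
  obtain z where z: "x0 < z" "z < y" "f y - f x0 = (y - x0) * f' z"
    using MVT2[OF greater, of f f'] der y by force
  have "\<bar>z - x0\<bar> < d" using z y by auto
  hence "\<bar>f' z\<bar> \<le> B" by (rule bnd)
  thus ?thesis using z greater by (simp add: abs_mult mult.commute mult_right_mono)
qed simp

lemma DERIV_set_integral:
  fixes f f' :: "real \<Rightarrow> real \<Rightarrow> real" and g :: "real \<Rightarrow> real" and S :: "real set" and x0 d :: real
  assumes d: "d > 0"
  and int: "\<And>x. \<bar>x - x0\<bar> < d \<Longrightarrow> set_integrable lborel S (f x)"
  and der: "\<And>x s. \<bar>x - x0\<bar> < d \<Longrightarrow> s \<in> S \<Longrightarrow> ((\<lambda>x. f x s) has_real_derivative f' x s) (at x)"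
  and g: "set_integrable lborel S g"
  and bnd: "\<And>x s. \<bar>x - x0\<bar> < d \<Longrightarrow> s \<in> S \<Longrightarrow> \<bar>f' x s\<bar> \<le> g s"
  and int': "set_integrable lborel S (f' x0)"
  shows "((\<lambda>x. LBINT s:S. f x s) has_real_derivative (LBINT s:S. f' x0 s)) (at x0)"
  unfolding DERIV_def tendsto_at_iff_sequentially
proof (intro allI impI)
  fix X :: "nat \<Rightarrow> real"
  assume X0: "\<forall>i. X i \<in> UNIV - {0}" and X: "X \<longlonglongrightarrow> 0"
  from X d obtain N where N: "\<And>n. n \<ge> N \<Longrightarrow> \<bar>X n\<bar> < d"
    unfolding LIMSEQ_def dist_real_def by fastforce
  define h where "h n = X (n + N)" for n
  have hN: "\<bar>h n\<bar> < d" for n unfolding h_def by (rule N) simp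
  have h0: "h n \<noteq> 0" for n using X0 unfolding h_def by auto
  have mv: "\<bar>f (x0 + h n) s - f x0 s\<bar> \<le> g s * \<bar>h n\<bar>" if "s \<in> S" for n s
    using mvt_bound[of x0 d "\<lambda>x. f x s" "\<lambda>x. f' x s" "g s" "x0 + h n"] der bnd that hN by auto
  define sq where "sq n t = indicator S t * ((f (x0 + h n) t - f x0 t) / h n)" for n t
  have eq: "(LBINT s:S. f (x0 + h n) s) - (LBINT s:S. f x0 s) = h n * integral\<^sup>L lborel (sq n)" for n
  proof -
    have i1: "set_integrable lborel S (f (x0 + h n))" using int hN by simp
    have i2: "set_integrable lborel S (f x0)" using int d by simp
    have "(LBINT s:S. (f (x0 + h n) s - f x0 s) / h n) = ((LBINT s:S. f (x0 + h n) s) - (LBINT s:S. f x0 s)) / h n"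
      using set_integral_diff(2)[OF i1 i2] by simp
    moreover have "(LBINT s:S. (f (x0 + h n) s - f x0 s) / h n) = integral\<^sup>L lborel (sq n)"
      unfolding set_lebesgue_integral_def sq_def by simp
    ultimately show ?thesis using h0[of n] by (simp add: field_simps)
  qed
  have conv: "(\<lambda>n. integral\<^sup>L lborel (sq n)) \<longlonglongrightarrow> integral\<^sup>L lborel (\<lambda>t. indicator S t * f' x0 t)"
  proof (rule integral_dominated_convergence[where w = "\<lambda>t. indicator S t * g t"])
    show "(\<lambda>t. indicator S t * f' x0 t) \<in> borel_measurable lborel"
      using int' unfolding set_integrable_def by simp
    show "sq n \<in> borel_measurable lborel" for n
    proof -
      have "set_integrable lborel S (\<lambda>t. (f (x0 + h n) t - f x0 t) / h n)"
        using int hN d by (intro set_integrable_divide set_integral_diff(1)) auto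
      thus ?thesis unfolding set_integrable_def sq_def by simp
    qed
    show "integrable lborel (\<lambda>t. indicator S t * g t)" using g unfolding set_integrable_def by simp
    show "AE t in lborel. (\<lambda>n. sq n t) \<longlonglongrightarrow> indicator S t * f' x0 t"
    proof (rule AE_I2)
      fix t
      show "(\<lambda>n. sq n t) \<longlonglongrightarrow> indicator S t * f' x0 t"
      proof (cases "t \<in> S")
        case True
        have D: "((\<lambda>hh. (f (x0 + hh) t - f x0 t) / hh) \<longlongrightarrow> f' x0 t) (at 0)"
          using der[of x0 t] True d unfolding DERIV_def by simp
        have hl: "h \<longlonglongrightarrow> 0" unfolding h_def by (rule LIMSEQ_ignore_initial_segment[OF X])
        have "(\<lambda>n. (f (x0 + h n) t - f x0 t) / h n) \<longlonglongrightarrow> f' x0 t"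
          using D[unfolded tendsto_at_iff_sequentially, rule_format, of h] hl h0 by (simp add: comp_def)
        thus ?thesis using True unfolding sq_def by simp
      qed (simp add: sq_def)
    qed
    show "AE t in lborel. norm (sq n t) \<le> indicator S t * g t" for n
    proof (rule AE_I2)
      fix t show "norm (sq n t) \<le> indicator S t * g t"
      proof (cases "t \<in> S")
        case True
        have "\<bar>(f (x0 + h n) t - f x0 t) / h n\<bar> \<le> g t"
          using mv[OF True, of n] h0[of n] by (simp add: abs_divide divide_le_eq)
        thus ?thesis using True unfolding sq_def by simp
      qed (simp add: sq_def)
    qed
  qed
  have lim: "(\<lambda>n. ((LBINT s:S. f (x0 + h n) s) - (LBINT s:S. f x0 s)) / h n) \<longlonglongrightarrow> (LBINT s:S. f' x0 s)"
    using conv eq h0 unfolding set_lebesgue_integral_def by simp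
  show "((\<lambda>hh. ((LBINT s:S. f (x0 + hh) s) - (LBINT s:S. f x0 s)) / hh) \<circ> X) \<longlonglongrightarrow> (LBINT s:S. f' x0 s)"
    by (rule LIMSEQ_offset[where k = N]) (use lim in \<open>simp add: h_def comp_def\<close>)
qed



lemma powr_P1: "s > 0 \<Longrightarrow> s powr (- k - 1) = s powr (-k) / (s::real)"
  using powr_diff[of s "-k" 1] by (simp add: algebra_simps)
lemma powr_P1': assumes "s > 0" shows "s powr (- 1 - k) = s powr (-k) / (s::real)"
proof -
  have e: "- 1 - k = - k - 1" by simp
  show ?thesis unfolding e using powr_P1[OF assms] .
qed
lemma powr_P2: "s > 0 \<Longrightarrow> s powr (1 - k) = s * s powr (-k::real)"
  using powr_add[of s 1 "-k"] by (simp add: algebra_simps)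
lemmas powr_Ps = powr_P1 powr_P1' powr_P2

lemma kern_deriv_b:
  assumes s: "s > 0"
  shows "((\<lambda>x. kern m k x s) has_real_derivative (-(1/2) * kern m (k+1) x s)) (at x)"
  unfolding kern_def
  using s by (auto intro!: derivative_eq_intros simp: powr_Ps field_simps)

lemma G_deriv:
  assumes k: "k > 1" and b: "b > 0"
  shows "(G m k has_real_derivative (-(1/2) * G m (k+1) b)) (at b)"
proof -
  have "((\<lambda>x. LBINT s:{0<..}. kern m k x s) has_real_derivative (LBINT s:{0<..}. -(1/2) * kern m (k+1) b s)) (at b)"
  proof (rule DERIV_set_integral[where d = "b/2" and g = "\<lambda>s. 1/2 * (s powr (-(k+1)) * exp (-((b/2)/2)/s))"])
    show "set_integrable lborel {0<..} (kern m k x)" if "\<bar>x - b\<bar> < b/2" for x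
    proof -
      have "x > 0" using that by (auto simp: abs_if split: if_split_asm)
      thus ?thesis using k by (intro kern_int) auto
    qed
    show "((\<lambda>x. kern m k x s) has_real_derivative (-(1/2) * kern m (k+1) x s)) (at x)" if "s \<in> {0<..}" for x s
      using that by (intro kern_deriv_b) auto
    show "set_integrable lborel {0<..} (\<lambda>s. 1/2 * (s powr (-(k+1)) * exp (-((b/2)/2)/s)))"
      using k b by (intro set_integrable_mult_right L0) auto
    show "\<bar>-(1/2) * kern m (k+1) x s\<bar> \<le> 1/2 * (s powr (-(k+1)) * exp (-((b/2)/2)/s))"
      if "\<bar>x - b\<bar> < b/2" "s \<in> {0<..}" for x s
    proof -
      have "b/2 \<le> x" using that by (auto simp: abs_if split: if_split_asm)
      thus ?thesis using kern_bound[of s "b/2" x m "k+1"] that by (simp add: abs_mult)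
    qed
    show "set_integrable lborel {0<..} (\<lambda>s. -(1/2) * kern m (k+1) b s)"
      using k b by (intro set_integrable_mult_right kern_int) auto
  qed (use b in auto)
  moreover have "(LBINT s:{0<..}. -(1/2) * kern m (k+1) b s) = -(1/2) * G m (k+1) b"
    unfolding G_def by (rule set_integral_mult_right)
  moreover have "(\<lambda>x. LBINT s:{0<..}. kern m k x s) = G m k" unfolding G_def[abs_def] ..
  ultimately show ?thesis by simp
qed

lemma G_rec:
  assumes k: "k > 2" and b: "b > 0"
  shows "(1 - k) * G m k b + (b/2) * G m (k+1) b - (m^2/2) * G m (k-1) b = 0"
proof -
  define f where "f s = (1 - k) * kern m k b s + (b/2) * kern m (k+1) b s - (m^2/2) * kern m (k-1) b s" for s
  have i1: "set_integrable lborel {0<..} (kern m k b)" using k b by (intro kern_int) auto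
  have i2: "set_integrable lborel {0<..} (kern m (k+1) b)" using k b by (intro kern_int) auto
  have i3: "set_integrable lborel {0<..} (kern m (k-1) b)" using k b by (intro kern_int) auto
  have fi: "set_integrable lborel {0<..} f"
    unfolding f_def using i1 i2 i3 by (intro set_integral_add set_integral_diff set_integrable_mult_right) auto
  have "(LBINT s=ereal 0..\<infinity>. f s) = 0 - 0"
  proof (rule interval_integral_FTC_integrable[where F = "kern m (k-1) b"])
    show "(kern m (k-1) b has_vector_derivative f x) (at x)" if "ereal 0 < ereal x" for x
    proof -
      have x: "x > 0" using that by simp
      show ?thesis
        unfolding has_real_derivative_iff_has_vector_derivative[symmetric] f_def kern_def
        using x by (auto intro!: derivative_eq_intros simp: powr_Ps field_simps)
    qed
    show "isCont f x" if "ereal 0 < ereal x" for x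
      using that unfolding f_def kern_def by (auto intro!: continuous_intros)
    show "set_integrable lborel (einterval (ereal 0) \<infinity>) f" using fi by simp
    show "((kern m (k-1) b \<circ> real_of_ereal) \<longlongrightarrow> 0) (at_right (ereal 0))"
      unfolding ereal_tendsto_simps kern_def using b k by real_asymp
    show "((kern m (k-1) b \<circ> real_of_ereal) \<longlongrightarrow> 0) (at_left \<infinity>)"
      unfolding ereal_tendsto_simps
    proof (rule tendsto_sandwich[where f = "\<lambda>_. 0" and h = "\<lambda>s. s powr (-(k-1))"])
      show "\<forall>\<^sub>F s in at_top. 0 \<le> kern m (k-1) b s" unfolding kern_def by simp
      show "\<forall>\<^sub>F s in at_top. kern m (k-1) b s \<le> s powr (-(k-1))"
        using eventually_gt_at_top[of 0]
      proof eventually_elim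
        case (elim s)
        have "b/(2* s) \<ge> 0" "m^2* s/2 \<ge> 0" using elim b by auto
        hence "exp (- (b / (2 * s)) - m^2 * s / 2) \<le> 1" by simp
        thus ?case unfolding kern_def by (simp add: mult_left_le)
      qed
      show "((\<lambda>s::real. s powr (-(k-1))) \<longlongrightarrow> 0) at_top" using k by real_asymp
    qed simp
  qed simp
  hence "(LBINT s:{0<..}. f s) = 0" by (simp add: interval_integral_to_infinity_eq)
  moreover have "(LBINT s:{0<..}. f s) = (1 - k) * G m k b + (b/2) * G m (k+1) b - (m^2/2) * G m (k-1) b"
    unfolding f_def G_def
    using i1 i2 i3
    by (subst set_integral_diff set_integral_add, (intro set_integral_add set_integral_diff set_integrable_mult_right; simp)+)+ simp
  ultimately show ?thesis by simp
qed


definition CC :: "real \<Rightarrow> real" where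
  "CC \<gamma> = 2 / (2 powr (\<gamma>/2) * Gamma (\<gamma>/2) * sqrt (2 * pi))"

lemma integrand_eq:
  assumes s: "s > 0"
  shows "bessel_p \<gamma> x s * passage_p \<mu> s t
       = CC \<gamma> * x powr (\<gamma> - 1) * (t * exp (\<mu> * t)) * kern \<mu> ((\<gamma> + 3) / 2) (x^2 + t^2) s"
proof -
  have e1: "(2 * s) powr (\<gamma>/2) = 2 powr (\<gamma>/2) * s powr (\<gamma>/2)" using s by (simp add: powr_mult)
  have e2: "sqrt (2 * pi * s ^ 3) = sqrt (2 * pi) * s powr (3/2)"
  proof -
    have "s powr (3/2) = sqrt (s powr 3)" using s by (simp add: powr_half_sqrt_powr)
    also have "s powr 3 = s ^ 3" using s by (simp add: powr_realpow)
    finally show ?thesis by (simp add: real_sqrt_mult)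
  qed
  have e3: "s powr (- ((\<gamma> + 3) / 2)) = 1 / (s powr (\<gamma>/2) * s powr (3/2))"
  proof -
    have a: "(\<gamma> + 3) / 2 = \<gamma>/2 + 3/2" by simp
    have "s powr (- ((\<gamma> + 3) / 2)) = inverse (s powr ((\<gamma> + 3) / 2))" by (rule powr_minus)
    also have "\<dots> = inverse (s powr (\<gamma>/2) * s powr (3/2))" unfolding a by (simp only: powr_add)
    finally show ?thesis by (simp only: inverse_eq_divide)
  qed
  have e4: "exp (- (x^2) / (2 * s)) * exp (- ((t - \<mu> * s)^2) / (2 * s))
      = exp (\<mu> * t) * exp (- ((x^2 + t^2) / (2 * s)) - \<mu>^2 * s / 2)"
  proof -
    have "- (x^2) / (2 * s) + - ((t - \<mu> * s)^2) / (2 * s) = \<mu> * t + (- ((x^2 + t^2) / (2 * s)) - \<mu>^2 * s / 2)"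
    proof -
      have "(t - \<mu> * s)^2 / (2 * s) = t^2/(2 * s) - \<mu> * t + \<mu>^2 * s / 2"
        using s by (simp add: field_simps power2_eq_square)
      moreover have "(x^2 + t^2) / (2 * s) = x^2/(2 * s) + t^2/(2 * s)" by (rule add_divide_distrib)
      ultimately show ?thesis by (simp only: minus_divide_left[symmetric])
    qed
    thus ?thesis by (simp add: exp_add[symmetric])
  qed
  have gen: "\<And>X eA eB eM eC P S1 Gm Q S2 :: real. eA * eB = eM * eC \<Longrightarrow>
     2 * X * eA / (P * S1 * Gm) * (t * eB / (Q * S2)) = 2 / (P * Gm * Q) * X * (t * eM) * (1 / (S1 * S2) * eC)"
  proof -
    fix X eA eB eM eC P S1 Gm Q S2 :: real
    assume h: "eA * eB = eM * eC"
    have "2 * X * eA / (P * S1 * Gm) * (t * eB / (Q * S2)) = 2 * X * t * (eA * eB) * (inverse P * inverse S1 * inverse Gm * inverse Q * inverse S2)"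
      by (simp add: divide_inverse inverse_mult_distrib mult_ac)
    also have "\<dots> = 2 * X * t * (eM * eC) * (inverse P * inverse S1 * inverse Gm * inverse Q * inverse S2)" using h by simp
    also have "\<dots> = 2 / (P * Gm * Q) * X * (t * eM) * (1 / (S1 * S2) * eC)"
      by (simp add: divide_inverse inverse_mult_distrib mult_ac)
    finally show "2 * X * eA / (P * S1 * Gm) * (t * eB / (Q * S2)) = 2 / (P * Gm * Q) * X * (t * eM) * (1 / (S1 * S2) * eC)" .
  qed
  show ?thesis
    unfolding bessel_p_def passage_p_def kern_def CC_def e1 e2 e3
    by (rule gen[OF e4])
qed

lemma q_mu_eq:
  "q_mu \<gamma> \<mu> x t = CC \<gamma> * x powr (\<gamma> - 1) * (t * exp (\<mu> * t)) * G \<mu> ((\<gamma> + 3) / 2) (x^2 + t^2)"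
proof -
  have "q_mu \<gamma> \<mu> x t = (LBINT s:{0<..}. CC \<gamma> * x powr (\<gamma> - 1) * (t * exp (\<mu> * t)) * kern \<mu> ((\<gamma> + 3) / 2) (x^2 + t^2) s)"
    unfolding q_mu_def by (rule set_lebesgue_integral_cong) (auto simp: integrand_eq)
  also have "\<dots> = CC \<gamma> * x powr (\<gamma> - 1) * (t * exp (\<mu> * t)) * G \<mu> ((\<gamma> + 3) / 2) (x^2 + t^2)"
    unfolding G_def by (rule set_integral_mult_right)
  finally show ?thesis .
qed



lemma G_chain:
  assumes "k > 1" "(f has_real_derivative f') (at x)" "f x > 0"
  shows "((\<lambda>x. G m k (f x)) has_real_derivative (-(1/2) * G m (k+1) (f x) * f')) (at x)"
  using DERIV_chain2[OF G_deriv[OF assms(1,3)] assms(2)] .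

lemma t_derivs:
  fixes C P m a r :: real
  assumes r: "r > 0" and a: "a > 1"
  defines "Q \<equiv> \<lambda>t. C * P * (t * exp (m * t)) * G m a (r^2 + t^2)"
  and "D1 \<equiv> \<lambda>t. C * P * ((exp (m * t) + t * (m * exp (m * t))) * G m a (r^2 + t^2)
              - t^2 * exp (m * t) * G m (a+1) (r^2 + t^2))"
  and "D2 \<equiv> \<lambda>t. C * P * ((2 * m * exp (m * t) + t * m^2 * exp (m * t)) * G m a (r^2 + t^2)
              - t * (exp (m * t) + t * m * exp (m * t)) * G m (a+1) (r^2 + t^2)
              - (2 * t * exp (m * t) + t^2 * m * exp (m * t)) * G m (a+1) (r^2 + t^2)
              + t^3 * exp (m * t) * G m (a+1+1) (r^2 + t^2))"
  shows "(Q has_real_derivative D1 t) (at t)" "(D1 has_real_derivative D2 t) (at t)"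
proof -
  have b: "r^2 + t^2 > 0" using r by (simp add: add_pos_nonneg)
  have gd: "((\<lambda>t. G m k (r^2 + t^2)) has_real_derivative (-(1/2) * G m (k+1) (r^2 + t^2) * (2 * t))) (at t)"
    if "k > 1" for k
  proof -
    have d: "((\<lambda>t. r^2+t^2) has_real_derivative 2*t) (at t)" by (auto intro!: derivative_eq_intros)
    show ?thesis using G_chain[OF that d] b by simp
  qed
  have a1: "a + 1 > 1" using a by simp
  note g0 = gd[OF a] and g1 = gd[OF a1]
  have e: "((\<lambda>t. exp (m * t)) has_real_derivative m * exp (m * t)) (at t)"
    by (auto intro!: derivative_eq_intros)
  show "(Q has_real_derivative D1 t) (at t)"
    unfolding Q_def D1_def
    apply (rule derivative_eq_intros g0 refl)+
    apply (simp add: algebra_simps power2_eq_square)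
    done
  show "(D1 has_real_derivative D2 t) (at t)"
    unfolding D2_def D1_def
    apply (rule derivative_eq_intros g0 g1 refl)+
    apply (simp add: algebra_simps power2_eq_square power3_eq_cube)
    done
qed

lemma x_derivs:
  fixes C L m a g t x :: real
  assumes x: "x > 0" and a: "a > 1"
  defines "R \<equiv> \<lambda>x. C * x powr (g - 1) * L * G m a (x^2 + t^2)"
  and "R1 \<equiv> \<lambda>x. C * L * ((g - 1) * x powr (g - 1) / x * G m a (x^2 + t^2)
           - x powr (g - 1) * x * G m (a+1) (x^2 + t^2))"
  and "R2 \<equiv> \<lambda>x. C * L * ((g - 1) * (g - 2) * x powr (g - 1) / x^2 * G m a (x^2 + t^2)
           - (2 * g - 1) * x powr (g - 1) * G m (a+1) (x^2 + t^2)
           + x powr (g - 1) * x^2 * G m (a+1+1) (x^2 + t^2))"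
  and "S1 \<equiv> \<lambda>x. C * L * ((g - 2) * x powr (g - 1) / x^2 * G m a (x^2 + t^2)
           - x powr (g - 1) * G m (a+1) (x^2 + t^2))"
  shows "(R has_real_derivative R1 x) (at x)" "(R1 has_real_derivative R2 x) (at x)"
    "((\<lambda>x. R x / x) has_real_derivative S1 x) (at x)"
proof -
  have b: "x^2 + t^2 > 0" using x by (simp add: add_pos_nonneg)
  have gd: "((\<lambda>x. G m k (x^2 + t^2)) has_real_derivative (-(1/2) * G m (k+1) (x^2 + t^2) * (2 * x))) (at x)"
    if "k > 1" for k
  proof -
    have d: "((\<lambda>x. x^2+t^2) has_real_derivative 2*x) (at x)" by (auto intro!: derivative_eq_intros)
    show ?thesis using G_chain[OF that d] b by simp
  qed
  have a1: "a + 1 > 1" using a by simp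
  note g0 = gd[OF a] and g1 = gd[OF a1]
  have xne: "x \<noteq> 0" using x by simp
  have pw0: "x powr (g - 2) = x powr (g - 1) / x" using powr_diff[of x "g - 1" 1] x by simp
  have pw: "x powr (g - 1 - 1) = x powr (g - 1) / x" using pw0 by simp
  show "(R has_real_derivative R1 x) (at x)"
    unfolding R_def R1_def
    apply (rule derivative_eq_intros g0 refl x xne)+
    using x by (simp add: pw pw0 field_simps power2_eq_square)
  show "(R1 has_real_derivative R2 x) (at x)"
    unfolding R2_def R1_def
    apply (rule derivative_eq_intros g0 g1 refl x xne)+
    using x by (simp add: pw pw0 field_simps power2_eq_square)
  show "((\<lambda>x. R x / x) has_real_derivative S1 x) (at x)"
    unfolding R_def S1_def
    apply (rule derivative_eq_intros g0 g1 refl x xne)+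
    using x by (simp add: pw pw0 field_simps power2_eq_square)
qed



lemma final_alg:
  fixes C P E G0 G1 G2 m g r t :: real
  assumes r: "r > 0"
  and rec: "(1 - ((g + 3) / 2 + 1)) * G1 + ((r^2 + t^2) / 2) * G2 - (m^2 / 2) * G0 = 0"
  shows "2 * m * (C * P * ((E + t * (m * E)) * G0 - t^2 * E * G1))
        - C * P * ((2 * m * E + t * m^2 * E) * G0 - t * (E + t * m * E) * G1
                   - (2 * t * E + t^2 * m * E) * G1 + t^3 * E * G2)
      = C * (t * E) * ((g - 1) * (g - 2) * P / r^2 * G0 - (2 * g - 1) * P * G1 + P * r^2 * G2)
        - (g - 1) * (C * (t * E) * ((g - 2) * P / r^2 * G0 - P * G1))"
proof -
  define Q where "Q = P / r^2"
  have PQ: "P = Q * r^2" using r unfolding Q_def by simp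
  have rec': "(r^2 + t^2) * G2 = (g + 3) * G1 + m^2 * G0" using rec by (simp add: field_simps)
  show ?thesis unfolding Q_def[symmetric] unfolding PQ using rec'
    by algebra
qed


theorem mainTheorem11:
  fixes \<gamma> \<mu> r t :: real
  assumes "\<gamma> > 0" and "\<mu> \<ge> 0" and "r > 0" and "t > 0"
  shows "(\<forall>t'>0. (\<lambda>x. q_mu \<gamma> \<mu> r x) differentiable (at t'))
       \<and> deriv (\<lambda>x. q_mu \<gamma> \<mu> r x) differentiable (at t)
       \<and> (\<forall>r'>0. (\<lambda>x. q_mu \<gamma> \<mu> x t) differentiable (at r'))
       \<and> deriv (\<lambda>x. q_mu \<gamma> \<mu> x t) differentiable (at r)
       \<and> 2 * \<mu> * deriv (\<lambda>x. q_mu \<gamma> \<mu> r x) t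
           - deriv (deriv (\<lambda>x. q_mu \<gamma> \<mu> r x)) t
         = deriv (deriv (\<lambda>x. q_mu \<gamma> \<mu> x t)) r
           - (\<gamma> - 1) * deriv (\<lambda>x. q_mu \<gamma> \<mu> x t / x) r"
proof -
  note gpos = assms(1) and r = assms(3) and tpos = assms(4)
  define a where "a = (\<gamma> + 3) / 2"
  have a1: "a > 1" using gpos unfolding a_def by simp
  define C where "C = CC \<gamma>"
  define Q where "Q = (\<lambda>t. C * r powr (\<gamma> - 1) * (t * exp (\<mu> * t)) * G \<mu> a (r^2 + t^2))"
  define D1 where "D1 = (\<lambda>t. C * r powr (\<gamma> - 1) * ((exp (\<mu> * t) + t * (\<mu> * exp (\<mu> * t))) * G \<mu> a (r^2 + t^2)
              - t^2 * exp (\<mu> * t) * G \<mu> (a+1) (r^2 + t^2)))"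
  define D2 where "D2 = (\<lambda>t. C * r powr (\<gamma> - 1) * ((2 * \<mu> * exp (\<mu> * t) + t * \<mu>^2 * exp (\<mu> * t)) * G \<mu> a (r^2 + t^2)
              - t * (exp (\<mu> * t) + t * \<mu> * exp (\<mu> * t)) * G \<mu> (a+1) (r^2 + t^2)
              - (2 * t * exp (\<mu> * t) + t^2 * \<mu> * exp (\<mu> * t)) * G \<mu> (a+1) (r^2 + t^2)
              + t^3 * exp (\<mu> * t) * G \<mu> (a+1+1) (r^2 + t^2)))"
  define L where "L = t * exp (\<mu> * t)"
  define R where "R = (\<lambda>x. C * x powr (\<gamma> - 1) * L * G \<mu> a (x^2 + t^2))"
  define R1 where "R1 = (\<lambda>x. C * L * ((\<gamma> - 1) * x powr (\<gamma> - 1) / x * G \<mu> a (x^2 + t^2)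
           - x powr (\<gamma> - 1) * x * G \<mu> (a+1) (x^2 + t^2)))"
  define R2 where "R2 = (\<lambda>x. C * L * ((\<gamma> - 1) * (\<gamma> - 2) * x powr (\<gamma> - 1) / x^2 * G \<mu> a (x^2 + t^2)
           - (2 * \<gamma> - 1) * x powr (\<gamma> - 1) * G \<mu> (a+1) (x^2 + t^2)
           + x powr (\<gamma> - 1) * x^2 * G \<mu> (a+1+1) (x^2 + t^2)))"
  define S1 where "S1 = (\<lambda>x. C * L * ((\<gamma> - 2) * x powr (\<gamma> - 1) / x^2 * G \<mu> a (x^2 + t^2)
           - x powr (\<gamma> - 1) * G \<mu> (a+1) (x^2 + t^2)))"
  have Qeq: "(\<lambda>x. q_mu \<gamma> \<mu> r x) = Q"
    unfolding Q_def C_def a_def by (rule ext, rule q_mu_eq)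
  have Req: "(\<lambda>x. q_mu \<gamma> \<mu> x t) = R"
    unfolding R_def C_def a_def L_def by (rule ext, rule q_mu_eq)
  have dQ: "(Q has_real_derivative D1 s) (at s)" for s
    unfolding Q_def D1_def by (rule t_derivs(1)[OF r a1])
  have dD1: "(D1 has_real_derivative D2 s) (at s)" for s
    unfolding D2_def D1_def by (rule t_derivs(2)[OF r a1])
  have dR: "(R has_real_derivative R1 x) (at x)" if "x > 0" for x
    unfolding R_def R1_def by (rule x_derivs(1)[OF that a1])
  have dR1: "(R1 has_real_derivative R2 x) (at x)" if "x > 0" for x
    unfolding R1_def R2_def by (rule x_derivs(2)[OF that a1])
  have dS: "((\<lambda>x. R x / x) has_real_derivative S1 x) (at x)" if "x > 0" for x
    unfolding R_def S1_def by (rule x_derivs(3)[OF that a1])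
  have derQ: "deriv Q = D1" using dQ by (intro ext DERIV_imp_deriv)
  have dR1': "(deriv R has_real_derivative R2 r) (at r)"
  proof (rule has_field_derivative_transform_within_open[OF dR1[OF r], of "{0<..}"])
    show "R1 x = deriv R x" if "x \<in> {0<..}" for x using DERIV_imp_deriv[OF dR] that by simp
  qed (use r in auto)
  have 1: "\<forall>t'>0. Q differentiable (at t')" using dQ real_differentiable_def by blast
  have 2: "deriv Q differentiable (at t)" unfolding derQ using dD1 real_differentiable_def by blast
  have 3: "\<forall>r'>0. R differentiable (at r')" using dR real_differentiable_def by blast
  have 4: "deriv R differentiable (at r)" using dR1' real_differentiable_def by blast
  have e1: "deriv (deriv Q) t = D2 t" unfolding derQ by (rule DERIV_imp_deriv[OF dD1])
  have e2: "deriv (deriv R) r = R2 r" by (rule DERIV_imp_deriv[OF dR1'])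
  have e3: "deriv (\<lambda>x. q_mu \<gamma> \<mu> x t / x) r = S1 r"
  proof -
    have qR: "\<And>x. q_mu \<gamma> \<mu> x t = R x" using Req by (simp add: fun_eq_iff)
    show ?thesis unfolding qR by (rule DERIV_imp_deriv[OF dS[OF r]])
  qed
  have b: "r^2 + t^2 > 0" using r by (simp add: add_pos_nonneg)
  have ea: "(\<gamma> + 3) / 2 = a" by (simp add: a_def)
  have rec: "(1 - ((\<gamma> + 3) / 2 + 1)) * G \<mu> (a+1) (r^2 + t^2) + ((r^2 + t^2) / 2) * G \<mu> (a+1+1) (r^2 + t^2)
      - (\<mu>^2 / 2) * G \<mu> a (r^2 + t^2) = 0"
    unfolding ea using G_rec[of "a+1" "r^2 + t^2" \<mu>] a1 b by simp
  have 5: "2 * \<mu> * deriv Q t - deriv (deriv Q) t = deriv (deriv R) r - (\<gamma> - 1) * S1 r"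
    unfolding e1 e2 unfolding derQ unfolding D1_def D2_def R2_def S1_def L_def
    by (rule final_alg[OF r rec])
  show ?thesis unfolding Qeq Req using 1 2 3 4 5 e3 by simp
qed

end
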